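(* Let \(\mathcal{H}=(A,(H_i)_{i=1}^k)\) and \(\mathcal{K}=(B,(K_i)_{i=1}^k)\) be \(k\)-relational F-hypergraphs and \(f\colon\mathcal{H}\to\mathcal{K}\) a map of \(k\)-relational F-hypergraphs. The following are equivalent: (i) \(f\) is a positional reduction; (ii) the equivalence relation \(E=\{(a,a')\in A\times A\mid f(a)=f(a')\}\) is a regular equivalence on \((A,H_i)\) for each \(i\in\{1,\dots,k\}\), and \((B,K_i)=(A/E,H_i/E)\) for each \(i\) (with \(f\) the quotient map).
   Context: An F-hypergraph is \((A,H)\) with \(H\subseteq A\times\mathcal{P}(A)\) (hyperedges \((a,U)\)). A \(k\)-relational F-hypergraph is \((A,(H_i)_{i=1}^k)\) with each \((A,H_i)\) an F-hypergraph. A map \((A,(H_i))\to(B,(K_i))\) is a function \(f\colon A\to B\) with \((f(a),f(V))\in K_i\) whenever \((a,V)\in H_i\). It reflects hyperedges if for all \(a\in A\), all \(i\) and all \((f(a),U)\in K_i\) there is \(V\subseteq A\) with \((a,V)\in H_i\) and \(f(V)=U\). A positional reduction is a map that is surjective on vertices and reflects hyperedges. A regular equivalence on an F-hypergraph \((A,H)\) is an equivalence relation \(E\) on \(A\) such that for every \((a,a')\in E\) and every \((a,U)\in H\) there is \((a',U')\in H\) with: for each \(u\in U\) some \(u'\in U'\) has \((u,u')\in E\), and for each \(u'\in U'\) some \(u\in U\) has \((u,u')\in E\). For an equivalence relation \(E\) on \(A\), the blockmodel \(H/E\) is the F-hypergraph structure on the set of classes \(A/E\) in which \(([a],X)\)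 is a hyperedge iff there exists \((a,U)\in H\) with \(X=\{[u]\mid u\in U\}\). *)

theory Defs
  imports Main
begin

definition fhypergraph :: "'a set \<Rightarrow> ('a \<times> 'a set) set \<Rightarrow> bool" where
  "fhypergraph A H \<longleftrightarrow> H \<subseteq> A \<times> Pow A"

definition krel_fhypergraph :: "nat \<Rightarrow> 'a set \<Rightarrow> (nat \<Rightarrow> ('a \<times> 'a set) set) \<Rightarrow> bool" where
  "krel_fhypergraph k A H \<longleftrightarrow> (\<forall>i\<in>{1..k}. fhypergraph A (H i))"

definition krel_map ::
  "nat \<Rightarrow> 'a set \<Rightarrow> (nat \<Rightarrow> ('a \<times> 'a set) set) \<Rightarrow> 'b set \<Rightarrow> (nat \<Rightarrow> ('b \<times> 'b set) set)
   \<Rightarrow> ('a \<Rightarrow> 'b) \<Rightarrow> bool" where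
  "krel_map k A H B K f \<longleftrightarrow> (\<forall>a\<in>A. f a \<in> B) \<and>
     (\<forall>i\<in>{1..k}. \<forall>a V. (a, V) \<in> H i \<longrightarrow> (f a, f ` V) \<in> K i)"

definition reflects_hyperedges ::
  "nat \<Rightarrow> 'a set \<Rightarrow> (nat \<Rightarrow> ('a \<times> 'a set) set) \<Rightarrow> (nat \<Rightarrow> ('b \<times> 'b set) set)
   \<Rightarrow> ('a \<Rightarrow> 'b) \<Rightarrow> bool" where
  "reflects_hyperedges k A H K f \<longleftrightarrow>
     (\<forall>a\<in>A. \<forall>i\<in>{1..k}. \<forall>U. (f a, U) \<in> K i \<longrightarrow> (\<exists>V\<subseteq>A. (a, V) \<in> H i \<and> f ` V = U))"

definition positional_reduction ::
  "nat \<Rightarrow> 'a set \<Rightarrow> (nat \<Rightarrow> ('a \<times> 'a set) set) \<Rightarrow> 'b set \<Rightarrow> (nat \<Rightarrow> ('b \<times> 'b set) set)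
   \<Rightarrow> ('a \<Rightarrow> 'b) \<Rightarrow> bool" where
  "positional_reduction k A H B K f \<longleftrightarrow>
     krel_map k A H B K f \<and> f ` A = B \<and> reflects_hyperedges k A H K f"

definition regular_equivalence :: "'a set \<Rightarrow> ('a \<times> 'a set) set \<Rightarrow> 'a rel \<Rightarrow> bool" where
  "regular_equivalence A H E \<longleftrightarrow> equiv A E \<and>
     (\<forall>a a' U. (a, a') \<in> E \<longrightarrow> (a, U) \<in> H \<longrightarrow>
        (\<exists>U'. (a', U') \<in> H \<and> (\<forall>u\<in>U. \<exists>u'\<in>U'. (u, u') \<in> E)
                            \<and> (\<forall>u'\<in>U'. \<exists>u\<in>U. (u, u') \<in> E)))"

definition blockmodel :: "('a \<times> 'a set) set \<Rightarrow> 'a rel \<Rightarrow> ('a set \<times> 'a set set) set" where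
  "blockmodel H E = {(E `` {a}, (\<lambda>u. E `` {u}) ` U) | a U. (a, U) \<in> H}"

definition ker_rel :: "'a set \<Rightarrow> ('a \<Rightarrow> 'b) \<Rightarrow> 'a rel" where
  "ker_rel A f = {(a, a'). a \<in> A \<and> a' \<in> A \<and> f a = f a'}"

end

theory Submission
  imports Defs
begin

lemma ker_equiv: "equiv A (ker_rel A f)"
  unfolding equiv_def refl_on_def sym_def trans_def ker_rel_def by auto

lemma ker_class: "E = ker_rel A f \<Longrightarrow> E `` {a} = (if a \<in> A then {x\<in>A. f x = f a} else {})"
  unfolding ker_rel_def by auto

theorem lemma6p5:
  fixes k :: nat
    and A :: "'a set" and H :: "nat \<Rightarrow> ('a \<times> 'a set) set"
    and B :: "'b set" and K :: "nat \<Rightarrow> ('b \<times> 'b set) set"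
    and f :: "'a \<Rightarrow> 'b"
  assumes "krel_fhypergraph k A H"
    and "krel_fhypergraph k B K"
    and "krel_map k A H B K f"
  shows "positional_reduction k A H B K f \<longleftrightarrow>
    ((\<forall>i\<in>{1..k}. regular_equivalence A (H i) (ker_rel A f)) \<and>
     (\<exists>g. bij_betw g (A // ker_rel A f) B \<and>
          (\<forall>a\<in>A. g (ker_rel A f `` {a}) = f a) \<and>
          (\<forall>i\<in>{1..k}. K i = (\<lambda>(X, Y). (g X, g ` Y)) ` blockmodel (H i) (ker_rel A f))))"
proof -
  define E where "E = ker_rel A f"
  have HA: "\<And>i a U. i \<in> {1..k} \<Longrightarrow> (a, U) \<in> H i \<Longrightarrow> a \<in> A \<and> U \<subseteq> A"
    using assms(1) unfolding krel_fhypergraph_def fhypergraph_def by blast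
  have KB: "\<And>i a U. i \<in> {1..k} \<Longrightarrow> (a, U) \<in> K i \<Longrightarrow> a \<in> B \<and> U \<subseteq> B"
    using assms(2) unfolding krel_fhypergraph_def fhypergraph_def by blast
  have fA: "\<And>a. a \<in> A \<Longrightarrow> f a \<in> B" and fK: "\<And>i a V. i \<in> {1..k} \<Longrightarrow> (a, V) \<in> H i \<Longrightarrow> (f a, f ` V) \<in> K i"
    using assms(3) unfolding krel_map_def by blast+
  have Ein: "\<And>x y. (x, y) \<in> E \<longleftrightarrow> x \<in> A \<and> y \<in> A \<and> f x = f y"
    unfolding E_def ker_rel_def by auto
  have cls: "\<And>a. a \<in> A \<Longrightarrow> E `` {a} = {x\<in>A. f x = f a}"
    unfolding E_def ker_rel_def by auto
  show ?thesis
    unfolding E_def[symmetric]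
  proof
    assume pr: "positional_reduction k A H B K f"
    have pr': "krel_map k A H B K f \<and> f ` A = B \<and> reflects_hyperedges k A H K f"
      using pr unfolding positional_reduction_def .
    have surj: "f ` A = B" using pr' by (elim conjE)
    have rfl: "\<And>a i U. a \<in> A \<Longrightarrow> i \<in> {1..k} \<Longrightarrow> (f a, U) \<in> K i \<Longrightarrow> \<exists>V\<subseteq>A. (a, V) \<in> H i \<and> f ` V = U"
    proof -
      fix a i U assume "a \<in> A" "i \<in> {1..k}" "(f a, U) \<in> K i"
      moreover have "reflects_hyperedges k A H K f" using pr' by (elim conjE)
      ultimately show "\<exists>V\<subseteq>A. (a, V) \<in> H i \<and> f ` V = U" unfolding reflects_hyperedges_def by blast
    qed
    have reg: "\<forall>i\<in>{1..k}. regular_equivalence A (H i) E"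
      unfolding regular_equivalence_def
    proof (intro ballI conjI allI impI)
      show "equiv A E" unfolding E_def by (rule ker_equiv)
    next
      fix i a a' U assume i: "i \<in> {1..k}" and aa: "(a, a') \<in> E" and aU: "(a, U) \<in> H i"
      have a': "a' \<in> A" "f a = f a'" using aa unfolding Ein by auto
      have "(f a', f ` U) \<in> K i" using fK[OF i aU] a'(2) by simp
      then have "\<exists>V\<subseteq>A. (a', V) \<in> H i \<and> f ` V = f ` U" by (rule rfl[OF a'(1) i])
      then obtain V where V: "V \<subseteq> A" "(a', V) \<in> H i" "f ` V = f ` U"
        by (elim exE conjE) simp
      have UA: "U \<subseteq> A" using HA[OF i aU] by (rule conjunct2)
      show "\<exists>U'. (a', U') \<in> H i \<and> (\<forall>u\<in>U. \<exists>u'\<in>U'. (u, u') \<in> E) \<and> (\<forall>u'\<in>U'. \<exists>u\<in>U. (u, u') \<in> E)"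
      proof (intro exI conjI ballI)
        show "(a', V) \<in> H i" by fact
      next
        fix u assume "u \<in> U"
        then have "f u \<in> f ` V" using V by auto
        then obtain u' where "u' \<in> V" "f u = f u'" by (metis imageE)
        then show "\<exists>u'\<in>V. (u, u') \<in> E" using Ein \<open>u \<in> U\<close> UA V(1) by blast
      next
        fix u' assume "u' \<in> V"
        then have "f u' \<in> f ` U" using V by auto
        then obtain u where "u \<in> U" "f u' = f u" by (metis imageE)
        then show "\<exists>u\<in>U. (u, u') \<in> E" using Ein \<open>u' \<in> V\<close> UA V(1) by (metis subsetD)
      qed
    qed
    define g where "g X = f (SOME x. x \<in> X)" for X
    have gcl: "\<And>a. a \<in> A \<Longrightarrow> g (E `` {a}) = f a"
    proof -
      fix a assume a: "a \<in> A"
      have "a \<in> E `` {a}" using cls[OF a] a by auto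
      then have "(SOME x. x \<in> E `` {a}) \<in> E `` {a}" by (rule someI)
      then show "g (E `` {a}) = f a" unfolding g_def using cls[OF a] by auto
    qed
    have bij: "bij_betw g (A // E) B"
      unfolding bij_betw_def inj_on_def
    proof (intro conjI ballI impI)
      fix X Y assume X: "X \<in> A // E" and Y: "Y \<in> A // E" and gXY: "g X = g Y"
      obtain a where a: "a \<in> A" "X = E``{a}" using X by (rule quotientE)
      obtain b where b: "b \<in> A" "Y = E``{b}" using Y by (rule quotientE)
      have "f a = f b" using gXY a b gcl by metis
      then show "X = Y" using cls[OF a(1)] cls[OF b(1)] a(2) b(2) by simp
    next
      show "g ` (A // E) = B"
      proof
        show "g ` (A // E) \<subseteq> B"
        proof
          fix y assume "y \<in> g ` (A // E)"
          then obtain X where X: "X \<in> A // E" "y = g X" by blast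
          obtain a where a: "a \<in> A" "X = E``{a}" using X(1) by (rule quotientE)
          show "y \<in> B" using X(2) a gcl fA by metis
        qed
        show "B \<subseteq> g ` (A // E)"
        proof
          fix b assume "b \<in> B"
          then obtain a where a: "a \<in> A" "b = f a" using surj by blast
          have "E``{a} \<in> A // E" using a(1) by (rule quotientI)
          moreover have "b = g (E``{a})" using a gcl by metis
          ultimately show "b \<in> g ` (A // E)" by blast
        qed
      qed
    qed
    have Keq: "\<forall>i\<in>{1..k}. K i = (\<lambda>(X, Y). (g X, g ` Y)) ` blockmodel (H i) E"
    proof
      fix i assume i: "i \<in> {1..k}"
      have conv: "\<And>a U. (a, U) \<in> H i \<Longrightarrow> (\<lambda>(X, Y). (g X, g ` Y)) (E `` {a}, (\<lambda>u. E `` {u}) ` U) = (f a, f ` U)"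
      proof -
        fix a U assume aU: "(a, U) \<in> H i"
        then have "a \<in> A" "U \<subseteq> A" using HA[OF i] by auto
        moreover have "g ` (\<lambda>u. E `` {u}) ` U = f ` U" unfolding image_image using gcl \<open>U \<subseteq> A\<close> by (intro image_cong) auto
        ultimately show "?thesis a U" using gcl by simp
      qed
      show "K i = (\<lambda>(X, Y). (g X, g ` Y)) ` blockmodel (H i) E"
      proof
        show "K i \<subseteq> (\<lambda>(X, Y). (g X, g ` Y)) ` blockmodel (H i) E"
        proof
          fix p assume p: "p \<in> K i"
          obtain b W where bW: "p = (b, W)" by force
          then have "b \<in> B" using KB[OF i] p by auto
          then obtain a where a: "a \<in> A" "b = f a" using surj by auto
          then obtain V where V: "(a, V) \<in> H i" "f ` V = W" using rfl[OF a(1) i] p bW by auto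
          have "p = (\<lambda>(X, Y). (g X, g ` Y)) (E `` {a}, (\<lambda>u. E `` {u}) ` V)"
            using conv[OF V(1)] bW a V by simp
          moreover have "(E `` {a}, (\<lambda>u. E `` {u}) ` V) \<in> blockmodel (H i) E"
            unfolding blockmodel_def using V by blast
          ultimately show "p \<in> (\<lambda>(X, Y). (g X, g ` Y)) ` blockmodel (H i) E" by blast
        qed
        show "(\<lambda>(X, Y). (g X, g ` Y)) ` blockmodel (H i) E \<subseteq> K i"
          unfolding blockmodel_def using conv fK[OF i] by auto
      qed
    qed
    show "(\<forall>i\<in>{1..k}. regular_equivalence A (H i) E) \<and>
     (\<exists>g. bij_betw g (A // E) B \<and> (\<forall>a\<in>A. g (E `` {a}) = f a) \<and>
          (\<forall>i\<in>{1..k}. K i = (\<lambda>(X, Y). (g X, g ` Y)) ` blockmodel (H i) E))"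
      using reg bij gcl Keq by blast
  next
    assume R: "(\<forall>i\<in>{1..k}. regular_equivalence A (H i) E) \<and>
     (\<exists>g. bij_betw g (A // E) B \<and> (\<forall>a\<in>A. g (E `` {a}) = f a) \<and>
          (\<forall>i\<in>{1..k}. K i = (\<lambda>(X, Y). (g X, g ` Y)) ` blockmodel (H i) E))"
    then obtain g where bij: "bij_betw g (A // E) B" and gcl: "\<forall>a\<in>A. g (E `` {a}) = f a"
      and Keq: "\<forall>i\<in>{1..k}. K i = (\<lambda>(X, Y). (g X, g ` Y)) ` blockmodel (H i) E" by blast
    have reg: "\<And>i a a' U. i \<in> {1..k} \<Longrightarrow> (a, a') \<in> E \<Longrightarrow> (a, U) \<in> H i \<Longrightarrow>
        (\<exists>U'. (a', U') \<in> H i \<and> (\<forall>u\<in>U. \<exists>u'\<in>U'. (u, u') \<in> E) \<and> (\<forall>u'\<in>U'. \<exists>u\<in>U. (u, u') \<in> E))"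
      using R unfolding regular_equivalence_def by blast
    have surj: "f ` A = B"
    proof
      show "f ` A \<subseteq> B" using fA by auto
      show "B \<subseteq> f ` A"
      proof
        fix b assume "b \<in> B"
        then obtain X where "X \<in> A // E" "b = g X" using bij unfolding bij_betw_def by auto
        then show "b \<in> f ` A" using gcl unfolding quotient_def by auto
      qed
    qed
    have "reflects_hyperedges k A H K f"
      unfolding reflects_hyperedges_def
    proof (intro ballI allI impI)
      fix a i U assume a: "a \<in> A" and i: "i \<in> {1..k}" and aU: "(f a, U) \<in> K i"
      then obtain a0 U0 where H0: "(a0, U0) \<in> H i" and eq: "(f a, U) = (g (E``{a0}), g ` (\<lambda>u. E `` {u}) ` U0)"
        using Keq unfolding blockmodel_def by auto
      have a0: "a0 \<in> A" "U0 \<subseteq> A" using HA[OF i H0] by auto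
      have "g ` (\<lambda>u. E `` {u}) ` U0 = f ` U0" unfolding image_image using gcl a0 by (intro image_cong) auto
      then have U: "U = f ` U0" using eq by simp
      have "f a = f a0" using eq gcl a0 by simp
      then have "(a0, a) \<in> E" using Ein a a0 by simp
      then obtain U' where U': "(a, U') \<in> H i" "\<forall>u\<in>U0. \<exists>u'\<in>U'. (u, u') \<in> E" "\<forall>u'\<in>U'. \<exists>u\<in>U0. (u, u') \<in> E"
        using reg[OF i _ H0] by blast
      have "f ` U' = f ` U0"
      proof
        show "f ` U' \<subseteq> f ` U0"
        proof
          fix y assume "y \<in> f ` U'"
          then obtain u' where "u' \<in> U'" "y = f u'" by blast
          then obtain u where "u \<in> U0" "(u, u') \<in> E" using U'(3) by blast
          then show "y \<in> f ` U0" using Ein \<open>y = f u'\<close> by (metis imageI)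
        qed
        show "f ` U0 \<subseteq> f ` U'"
        proof
          fix y assume "y \<in> f ` U0"
          then obtain u where "u \<in> U0" "y = f u" by blast
          then obtain u' where "u' \<in> U'" "(u, u') \<in> E" using U'(2) by blast
          then show "y \<in> f ` U'" using Ein \<open>y = f u\<close> by (metis imageI)
        qed
      qed
      then show "\<exists>V\<subseteq>A. (a, V) \<in> H i \<and> f ` V = U" using U U' HA[OF i U'(1)] by auto
    qed
    then show "positional_reduction k A H B K f"
      unfolding positional_reduction_def using assms(3) surj by blast
  qed
qed

end
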